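(* Let $\mathbf I_F$ be a generalized Fisher information that is weakly faithful and subadditive on product-state families. Let $\{\mathcal N^\theta_{A\to B}\}_\theta$ be an environment-seizable channel family with environment state family $\{\rho^\theta_E\}_\theta$. Then $$\mathbf I^{\mathcal A}_F(\theta;\{\mathcal N^\theta_{A\to B}\}_\theta)=\mathbf I_F(\theta;\{\rho^\theta_E\}_\theta).$$
   Context: Finite-dimensional systems. A generalized Fisher information $\mathbf I_F$ assigns to each $\theta$ and family $\{\rho^\theta\}_\theta$ of density operators an extended real number with $\mathbf I_F(\theta;\{\rho^\theta_A\}_\theta)\ge\mathbf I_F(\theta;\{\mathcal K_{A\to B}(\rho^\theta_A)\}_\theta)$ for every $\theta$-independent channel $\mathcal K$; weakly faithful means it vanishes on $\theta$-independent families; subadditive on product-state families means $\mathbf I_F(\theta;\{\omega^\theta\otimes\tau^\theta\}_\theta)\le\mathbf I_F(\theta;\{\omega^\theta\}_\theta)+\mathbf I_F(\theta;\{\tau^\theta\}_\theta)$. Amortized Fisher information: $\mathbf I^{\mathcal A}_F(\theta;\{\mathcal N^\theta_{A\to B}\}_\theta):=\sup_{\{\rho^\theta_{RA}\}_\theta}[\mathbf I_F(\theta;\{\mathcal N^\theta_{A\to B}(\rho^\theta_{RA})\}_\theta)-\mathbf I_F(\theta;\{\rho^\theta_{RA}\}_\theta)]$ over state families with arbitrary reference $R$. The family is environment-parameterized with environment states $\{\rho^\theta_E\}_\theta$ if there is a $\theta$-independent channel $\mathcal M_{AE\to B}$ with $\mathcal N^\theta_{A\to B}(\omega_A)=\mathcal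 M_{AE\to B}(\omega_A\otimes\rho^\theta_E)$ for all inputs (acting as identity on any reference system); it is environment-seizable if moreover there exist a $\theta$-independent state $\zeta_{RA}$ and a $\theta$-independent channel $\mathcal D_{RB\to E}$ with $\mathcal D_{RB\to E}(\mathcal N^\theta_{A\to B}(\zeta_{RA}))=\rho^\theta_E$ for all $\theta$. *)

theory Defs
  imports Complex_Main "HOL-Library.Extended_Real" "Jordan_Normal_Form.Matrix"
begin

text \<open>Finite-dimensional quantum systems are given by their dimension (a positive
natural number).
A composite system XY has dimension dX * dY, with the tensor product realised by the
Kronecker product (first factor = most significant index).\<close>

definition mtrace :: "complex mat \<Rightarrow> complex" where
  "mtrace A = (\<Sum>i<dim_row A. A $$ (i, i))"

definition psd :: "nat \<Rightarrow> complex mat \<Rightarrow> bool" where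
  "psd n A \<longleftrightarrow> A \<in> carrier_mat n n \<and>
     (\<forall>v. dim_vec v = n \<longrightarrow> (A *\<^sub>v v) \<bullet>c v \<in> \<real> \<and> 0 \<le> Re ((A *\<^sub>v v) \<bullet>c v))"

definition density :: "nat \<Rightarrow> complex mat \<Rightarrow> bool" where
  "density n A \<longleftrightarrow> psd n A \<and> mtrace A = 1"

definition kron :: "complex mat \<Rightarrow> complex mat \<Rightarrow> complex mat" where
  "kron A B = mat (dim_row A * dim_row B) (dim_col A * dim_col B)
     (\<lambda>(i, j). A $$ (i div dim_row B, j div dim_col B) * B $$ (i mod dim_row B, j mod dim_col B))"

definition block :: "nat \<Rightarrow> complex mat \<Rightarrow> nat \<Rightarrow> nat \<Rightarrow> complex mat" where
  "block d X i j = mat d d (\<lambda>(a, b). X $$ (i * d + a, j * d + b))"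

text \<open>(id_R \<otimes> K)(X) for a map K from dA x dA to dB x dB matrices, where R has
dimension dR and X is a (dR*dA) x (dR*dA) matrix on R \<otimes> A.\<close>
definition id_tensor :: "nat \<Rightarrow> nat \<Rightarrow> nat \<Rightarrow> (complex mat \<Rightarrow> complex mat) \<Rightarrow> complex mat \<Rightarrow> complex mat" where
  "id_tensor dR dA dB K X = mat (dR * dB) (dR * dB)
     (\<lambda>(r, c). K (block dA X (r div dB) (c div dB)) $$ (r mod dB, c mod dB))"

definition channel :: "nat \<Rightarrow> nat \<Rightarrow> (complex mat \<Rightarrow> complex mat) \<Rightarrow> bool" where
  "channel dA dB K \<longleftrightarrow> 0 < dA \<and> 0 < dB \<and>
     (\<forall>X \<in> carrier_mat dA dA. K X \<in> carrier_mat dB dB \<and> mtrace (K X) = mtrace X) \<and>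
     (\<forall>X \<in> carrier_mat dA dA. \<forall>Y \<in> carrier_mat dA dA. \<forall>a b :: complex.
        K (a \<cdot>\<^sub>m X + b \<cdot>\<^sub>m Y) = a \<cdot>\<^sub>m K X + b \<cdot>\<^sub>m K Y) \<and>
     (\<forall>dR X. 0 < dR \<longrightarrow> psd (dR * dA) X \<longrightarrow> psd (dR * dB) (id_tensor dR dA dB K X))"

type_synonym fisher = "real \<Rightarrow> (real \<Rightarrow> complex mat) \<Rightarrow> ereal"

definition gen_fisher :: "fisher \<Rightarrow> bool" where
  "gen_fisher I \<longleftrightarrow> (\<forall>\<theta> dA dB (K :: complex mat \<Rightarrow> complex mat) \<rho>.
     channel dA dB K \<longrightarrow> (\<forall>t. density dA (\<rho> t)) \<longrightarrow> I \<theta> (\<lambda>t. K (\<rho> t)) \<le> I \<theta> \<rho>)"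

definition weakly_faithful :: "fisher \<Rightarrow> bool" where
  "weakly_faithful I \<longleftrightarrow> (\<forall>\<theta> d \<sigma>. density d \<sigma> \<longrightarrow> I \<theta> (\<lambda>t. \<sigma>) = 0)"

definition subadditive_product :: "fisher \<Rightarrow> bool" where
  "subadditive_product I \<longleftrightarrow> (\<forall>\<theta> m n \<omega> \<tau>.
     (\<forall>t. density m (\<omega> t)) \<longrightarrow> (\<forall>t. density n (\<tau> t)) \<longrightarrow>
     I \<theta> (\<lambda>t. kron (\<omega> t) (\<tau> t)) \<le> I \<theta> \<omega> + I \<theta> \<tau>)"

text \<open>Families with
infinite input Fisher information are excluded, since the difference is then the
undefined expression \<infinity> - \<infinity> (Isabelle's ereal would set it to \<infinity>).\<close>
definition amortized_fisher :: "fisher \<Rightarrow> nat \<Rightarrow> nat \<Rightarrow> real \<Rightarrow> (real \<Rightarrow> complex mat \<Rightarrow> complex mat) \<Rightarrow> ereal" where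
  "amortized_fisher I dA dB \<theta> N = (SUP p \<in> {(dR, \<rho>). 0 < dR \<and> (\<forall>t. density (dR * dA) (\<rho> t)) \<and> I \<theta> \<rho> < \<infinity>}.
     I \<theta> (\<lambda>t. id_tensor (fst p) dA dB (N t) (snd p t)) - I \<theta> (snd p))"

definition env_parameterized :: "nat \<Rightarrow> nat \<Rightarrow> nat \<Rightarrow> (real \<Rightarrow> complex mat \<Rightarrow> complex mat)
     \<Rightarrow> (real \<Rightarrow> complex mat) \<Rightarrow> (complex mat \<Rightarrow> complex mat) \<Rightarrow> bool" where
  "env_parameterized dA dB dE N \<rho>E M \<longleftrightarrow>
     channel (dA * dE) dB M \<and> (\<forall>t. channel dA dB (N t)) \<and> (\<forall>t. density dE (\<rho>E t)) \<and>
     (\<forall>t dR \<omega>. 0 < dR \<longrightarrow> density (dR * dA) \<omega> \<longrightarrow>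
        id_tensor dR dA dB (N t) \<omega> = id_tensor dR (dA * dE) dB M (kron \<omega> (\<rho>E t)))"

definition env_seizable :: "nat \<Rightarrow> nat \<Rightarrow> nat \<Rightarrow> (real \<Rightarrow> complex mat \<Rightarrow> complex mat)
     \<Rightarrow> (real \<Rightarrow> complex mat) \<Rightarrow> bool" where
  "env_seizable dA dB dE N \<rho>E \<longleftrightarrow>
     (\<exists>M. env_parameterized dA dB dE N \<rho>E M) \<and>
     (\<exists>dR \<zeta> D. 0 < dR \<and> density (dR * dA) \<zeta> \<and> channel (dR * dB) dE D \<and>
        (\<forall>t. D (id_tensor dR dA dB (N t) \<zeta>) = \<rho>E t))"

end

theory Submission
  imports Defs
begin


definition qf :: "nat \<Rightarrow> (nat \<Rightarrow> nat \<Rightarrow> complex) \<Rightarrow> (nat \<Rightarrow> complex) \<Rightarrow> complex" where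
  "qf n f v = (\<Sum>i<n. \<Sum>j<n. cnj (v i) * f i j * v j)"

definition nn :: "complex \<Rightarrow> bool" where "nn z \<longleftrightarrow> Im z = 0 \<and> 0 \<le> Re z"

definition psdf :: "nat \<Rightarrow> (nat \<Rightarrow> nat \<Rightarrow> complex) \<Rightarrow> bool" where
  "psdf n f \<longleftrightarrow> (\<forall>v. nn (qf n f v))"

lemma quad_eq:
  assumes "A \<in> carrier_mat n n" "dim_vec w = n"
  shows "(A *\<^sub>v w) \<bullet>c w = qf n (\<lambda>i j. A $$ (i,j)) (\<lambda>i. w $ i)"
  using assms
  by (simp add: qf_def scalar_prod_def mult_mat_vec_def row_def sum_distrib_right sum_distrib_left
      lessThan_atLeast0 mult.commute mult.left_commute)

lemma psd_iff: "psd n A \<longleftrightarrow> A \<in> carrier_mat n n \<and> psdf n (\<lambda>i j. A $$ (i,j))"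
proof
  assume a: "psd n A"
  hence c: "A \<in> carrier_mat n n" by (simp add: psd_def)
  show "A \<in> carrier_mat n n \<and> psdf n (\<lambda>i j. A $$ (i,j))"
  proof (intro conjI c, unfold psdf_def, intro allI)
    fix v :: "nat \<Rightarrow> complex"
    have "qf n (\<lambda>i j. A $$ (i,j)) v = qf n (\<lambda>i j. A $$ (i,j)) (\<lambda>i. vec n v $ i)"
      unfolding qf_def by (intro sum.cong refl) auto
    also have "\<dots> = (A *\<^sub>v vec n v) \<bullet>c vec n v" using quad_eq[OF c] by simp
    finally show "nn (qf n (\<lambda>i j. A $$ (i,j)) v)" using a unfolding psd_def nn_def
      by (simp add: complex_is_Real_iff)
  qed
next
  assume a: "A \<in> carrier_mat n n \<and> psdf n (\<lambda>i j. A $$ (i,j))"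
  thus "psd n A" unfolding psd_def psdf_def nn_def
    using quad_eq by (auto simp: complex_is_Real_iff)
qed



lemma qf_two:
  assumes "a < n" "b < n" "a \<noteq> b"
  shows "qf n f (\<lambda>i. (if i=a then x else 0) + (if i=b then y else 0)) =
     cnj x * f a a * x + cnj x * f a b * y + cnj y * f b a * x + cnj y * f b b * y"
proof -
  have e: "\<And>i. (if i=a then x else 0) + (if i=b then y else 0) = (if i = a then x else if i = b then y else 0)"
    using assms by auto
  have "qf n f (\<lambda>i. (if i=a then x else 0) + (if i=b then y else 0)) =
     (\<Sum>i<n. \<Sum>j<n. (if i = a then cnj x else if i = b then cnj y else 0) * f i j * (if j = a then x else if j = b then y else 0))"
    unfolding qf_def e by (intro sum.cong refl) auto
  also have "\<dots> = (\<Sum>i<n. (if i = a then cnj x else if i = b then cnj y else 0) * (f i a * x + f i b * y))"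
  proof (intro sum.cong refl)
    fix i assume "i \<in> {..<n}"
    have "(\<Sum>j<n. (if i = a then cnj x else if i = b then cnj y else 0) * f i j * (if j = a then x else if j = b then y else 0))
      = (\<Sum>j<n. (if j = a then (if i = a then cnj x else if i = b then cnj y else 0) * f i a * x else 0)
          + (if j = b then (if i = a then cnj x else if i = b then cnj y else 0) * f i b * y else 0))"
      using assms by (intro sum.cong refl) auto
    also have "\<dots> = (if i = a then cnj x else if i = b then cnj y else 0) * (f i a * x + f i b * y)"
      using assms by (simp only: sum.distrib sum.delta finite_lessThan lessThan_iff) (simp add: algebra_simps)
    finally show "(\<Sum>j<n. (if i = a then cnj x else if i = b then cnj y else 0) * f i j * (if j = a then x else if j = b then y else 0))
      = (if i = a then cnj x else if i = b then cnj y else 0) * (f i a * x + f i b * y)" .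
  qed
  also have "\<dots> = (\<Sum>i<n. (if i = a then cnj x * (f a a * x + f a b * y) else 0) + (if i = b then cnj y * (f b a * x + f b b * y) else 0))"
    using assms by (intro sum.cong refl) auto
  also have "\<dots> = cnj x * (f a a * x + f a b * y) + cnj y * (f b a * x + f b b * y)"
    using assms by (simp only: sum.distrib sum.delta finite_lessThan lessThan_iff) simp
  finally show ?thesis by (simp add: algebra_simps)
qed

lemma qf_one:
  assumes "a < n"
  shows "qf n f (\<lambda>i. if i=a then x else 0) = cnj x * f a a * x"
proof -
  have "qf n f (\<lambda>i. if i=a then x else 0) = (\<Sum>i<n. if i = a then cnj x * f a a * x else 0)"
  proof (unfold qf_def, intro sum.cong refl)
    fix i assume "i \<in> {..<n}"
    have "(\<Sum>j<n. cnj (if i = a then x else 0) * f i j * (if j = a then x else 0)) =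
      (\<Sum>j<n. if j = a then cnj (if i = a then x else 0) * f i a * x else 0)"
      by (intro sum.cong refl) auto
    also have "\<dots> = (if i = a then cnj x * f a a * x else 0)" using assms by (simp only: sum.delta finite_lessThan lessThan_iff) simp
    finally show "(\<Sum>j<n. cnj (if i = a then x else 0) * f i j * (if j = a then x else 0)) = (if i = a then cnj x * f a a * x else 0)" .
  qed
  thus ?thesis using assms by simp
qed

lemma psdf_diag: assumes "psdf n f" "a < n" shows "Im (f a a) = 0" "0 \<le> Re (f a a)"
  using assms(1)[unfolded psdf_def, rule_format, of "\<lambda>i. if i=a then 1 else 0"] qf_one[OF assms(2), of f 1]
  by (auto simp: nn_def)

lemma psdf_herm: assumes "psdf n f" "a < n" "b < n" shows "f b a = cnj (f a b)"
proof (cases "a = b")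
  case True thus ?thesis using psdf_diag[OF assms(1,2)] by (simp add: complex_eq_iff)
next
  case False
  have 1: "Im (f a a + f a b + f b a + f b b) = 0"
    using assms(1)[unfolded psdf_def, rule_format, of "\<lambda>i. (if i=a then 1 else 0) + (if i=b then 1 else 0)"]
      qf_two[OF assms(2,3) False, of f 1 1] by (simp add: nn_def)
  have 2: "Im (f a a + \<i> * f a b - \<i> * f b a + f b b) = 0"
    using assms(1)[unfolded psdf_def, rule_format, of "\<lambda>i. (if i=a then 1 else 0) + (if i=b then \<i> else 0)"]
      qf_two[OF assms(2,3) False, of f 1 \<i>] by (simp add: nn_def algebra_simps)
  show ?thesis using 1 2 psdf_diag[OF assms(1,2)] psdf_diag[OF assms(1,3)]
    by (simp add: complex_eq_iff)
qed

lemma psdf_zero_row: assumes "psdf n f" "q < n" "j < n" "f q q = 0" shows "f j q = 0"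
proof (rule ccontr)
  assume ne: "f j q \<noteq> 0"
  hence jq: "j \<noteq> q" using assms by auto
  define c where "c = f j q"
  define t where "t = - complex_of_real ((Re (f j j) + 1) / (cmod c)^2) * cnj c"
  have h: "f q j = cnj c" using psdf_herm[OF assms(1,3,2)] c_def by simp
  have "nn (qf n f (\<lambda>i. (if i=j then 1 else 0) + (if i=q then t else 0)))"
    using assms(1) unfolding psdf_def by blast
  hence "0 \<le> Re (f j j + f j q * t + cnj t * f q j)"
    using qf_two[OF assms(3,2) jq, of f 1 t] assms(4) by (simp add: nn_def)
  moreover have "Re (f j q * t + cnj t * f q j) = - 2 * (Re (f j j) + 1)"
  proof -
    have cm: "(cmod c)^2 \<noteq> 0" using ne c_def by simp
    have "c * cnj c = complex_of_real ((cmod c)^2)" using complex_norm_square[of c] by simp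
    hence "f j q * t = - complex_of_real (Re (f j j) + 1)"
      using cm unfolding t_def c_def[symmetric]
      by (simp add: field_simps)
    moreover have "cnj t * f q j = cnj (f j q * t)" using h c_def by simp
    ultimately show ?thesis by simp
  qed
  ultimately show False using psdf_diag[OF assms(1,3)] by simp
qed



lemma sum_if_out: fixes n :: nat shows
  "(\<Sum>i<n. \<Sum>j<n. if i = q then g j else 0) = (if q < n then (\<Sum>j<n. g j) else (0::'a::comm_monoid_add))"
proof -
  have "(\<Sum>i<n. \<Sum>j<n. if i = q then g j else 0) = (\<Sum>i<n. if i = q then (\<Sum>j<n. g j) else 0)"
    by (intro sum.cong refl) auto
  thus ?thesis using sum.delta[of "{..<n}" q "\<lambda>_. (\<Sum>j<n. g j)"] by simp
qed

lemma sum_if_out2: fixes n :: nat shows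
  "q < n \<Longrightarrow> (\<Sum>i<n. \<Sum>j<n. if i = q then (if j = q then x else 0) else 0) = (x::'a::comm_monoid_add)"
  using sum.delta[of "{..<n}" q "\<lambda>_. x"] by (simp only: sum_if_out) simp

lemma qf_shift:
  assumes "q < n"
  shows "qf n f (\<lambda>i. v i + (if i = q then c else 0)) =
    qf n f v + cnj c * (\<Sum>j<n. f q j * v j) + (\<Sum>i<n. cnj (v i) * f i q) * c + cnj c * f q q * c"
proof -
  have "qf n f (\<lambda>i. v i + (if i = q then c else 0)) =
    (\<Sum>i<n. \<Sum>j<n. cnj (v i) * f i j * v j + (if j = q then cnj (v i) * f i q * c else 0)
       + ((if i = q then cnj c * f q j * v j else 0) + (if i = q then (if j = q then cnj c * f q q * c else 0) else 0)))"
    unfolding qf_def by (intro sum.cong refl) (auto simp: algebra_simps)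
  also have "\<dots> = qf n f v + (\<Sum>i<n. cnj (v i) * f i q * c) +
      ((\<Sum>i<n. if i = q then cnj c * (\<Sum>j<n. f q j * v j) else 0) + (\<Sum>i<n. if i = q then cnj c * f q q * c else 0))"
    using assms unfolding qf_def
    by (simp only: sum.distrib sum.delta finite_lessThan lessThan_iff if_True sum_distrib_left[symmetric]
         mult.assoc sum_if_out sum_if_out2)
  also have "\<dots> = qf n f v + cnj c * (\<Sum>j<n. f q j * v j) + (\<Sum>i<n. cnj (v i) * f i q) * c + cnj c * f q q * c"
    using assms by (simp only: sum.delta finite_lessThan lessThan_iff if_True sum_distrib_right) simp
  finally show ?thesis .
qed

lemma qf_minus_rank1:
  "qf n (\<lambda>i j. f i j - g i * h j) v = qf n f v - (\<Sum>i<n. cnj (v i) * g i) * (\<Sum>j<n. h j * v j)"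
  unfolding qf_def by (simp add: algebra_simps sum_subtractf sum_distrib_left sum_distrib_right)

lemma psdf_step:
  assumes "psdf n f" "q < n"
  shows "psdf n (\<lambda>i j. f i j - f i q * (f q j / f q q))"
proof (cases "f q q = 0")
  case True thus ?thesis using assms by simp
next
  case False
  define a where "a = f q q"
  have aR: "cnj a = a" using psdf_diag[OF assms] a_def by (simp add: complex_eq_iff)
  show ?thesis unfolding psdf_def
  proof
    fix v
    define S where "S = (\<Sum>j<n. f q j * v j)"
    have T: "(\<Sum>i<n. cnj (v i) * f i q) = cnj S"
      unfolding S_def using psdf_herm[OF assms(1) assms(2)] 
      by (simp add: mult.commute)
    define c where "c = - S / a"
    have "qf n (\<lambda>i j. f i j - f i q * (f q j / f q q)) v = qf n f v - cnj S * (S / a)"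
      using qf_minus_rank1[of n f "\<lambda>i. f i q" "\<lambda>j. f q j / f q q" v] T
      unfolding S_def a_def by (simp add: sum_divide_distrib)
    also have "\<dots> = qf n f (\<lambda>i. v i + (if i = q then c else 0))"
      unfolding qf_shift[OF assms(2)] T S_def[symmetric] a_def[symmetric] c_def
      using False aR a_def by (simp add: field_simps)
    finally show "nn (qf n (\<lambda>i j. f i j - f i q * (f q j / f q q)) v)"
      using assms(1) unfolding psdf_def by simp
  qed
qed



lemma decomp_aux:
  "k \<le> n \<Longrightarrow> psdf n f \<Longrightarrow> (\<forall>i<n. \<forall>j<n. (i < n - k \<or> j < n - k) \<longrightarrow> f i j = 0) \<Longrightarrow>
   \<exists>w. \<forall>i<n. \<forall>j<n. f i j = (\<Sum>p<k. w p i * cnj (w p j))"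
proof (induction k arbitrary: f)
  case 0
  thus ?case by auto
next
  case (Suc k)
  define q where "q = n - Suc k"
  have qn: "q < n" using Suc.prems(1) q_def by simp
  define f' where "f' = (\<lambda>i j. f i j - f i q * (f q j / f q q))"
  have ps: "psdf n f'" unfolding f'_def by (rule psdf_step[OF Suc.prems(2) qn])
  have zr: "f q j = 0" "f j q = 0" if "f q q = 0" "j < n" for j
  proof -
    show "f j q = 0" using psdf_zero_row[OF Suc.prems(2) qn that(2) that(1)] .
    thus "f q j = 0" using psdf_herm[OF Suc.prems(2) that(2) qn] by simp
  qed
  have z: "\<forall>i<n. \<forall>j<n. (i < n - k \<or> j < n - k) \<longrightarrow> f' i j = 0"
  proof (intro allI impI)
    fix i j assume i: "i < n" and j: "j < n" and ij: "i < n - k \<or> j < n - k"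
    have old: "\<And>a b. a < n \<Longrightarrow> b < n \<Longrightarrow> (a < q \<or> b < q) \<Longrightarrow> f a b = 0"
      using Suc.prems(3) q_def by auto
    have nk: "n - k = Suc q" using Suc.prems(1) q_def by simp
    show "f' i j = 0"
    proof (cases "f q q = 0")
      case True
      thus ?thesis unfolding f'_def using ij old[OF i j] zr[OF True i] zr[OF True j] nk
        by (cases "i = q"; cases "j = q") (auto simp: less_Suc_eq)
    next
      case False
      have "n - k = Suc q" using Suc.prems(1) q_def by simp
      hence "i < q \<or> i = q \<or> j < q \<or> j = q" using ij by auto
      thus ?thesis unfolding f'_def using old[OF i j] old[OF i qn] old[OF qn j] False i j qn
        by auto
    qed
  qed
  obtain w' where w': "\<forall>i<n. \<forall>j<n. f' i j = (\<Sum>p<k. w' p i * cnj (w' p j))"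
    using Suc.IH[OF _ ps z] Suc.prems(1) by auto
  define s where "s = complex_of_real (sqrt (Re (f q q)))"
  have ss: "s * s = f q q"
  proof -
    have "s * s = complex_of_real (sqrt (Re (f q q)) * sqrt (Re (f q q)))" unfolding s_def by (simp only: of_real_mult)
    also have "\<dots> = complex_of_real (Re (f q q))" using psdf_diag(2)[OF Suc.prems(2) qn] by simp
    also have "\<dots> = f q q" using psdf_diag(1)[OF Suc.prems(2) qn] by (simp add: complex_eq_iff)
    finally show ?thesis .
  qed
  have cs: "cnj s = s" unfolding s_def by simp
  define w where "w = w'(k := (\<lambda>i. f i q / s))"
  show ?case
  proof (intro exI allI impI)
    fix i j assume i: "i < n" and j: "j < n"
    have h: "cnj (f j q) = f q j" using psdf_herm[OF Suc.prems(2) qn j] by simp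
    have "f i j = f' i j + f i q * (f q j / f q q)" unfolding f'_def by simp
    also have "f i q * (f q j / f q q) = w k i * cnj (w k j)"
      unfolding w_def using h cs ss by (simp add: field_simps)
    also have "f' i j = (\<Sum>p<k. w p i * cnj (w p j))" using w' i j unfolding w_def by simp
    finally show "f i j = (\<Sum>p<Suc k. w p i * cnj (w p j))" by simp
  qed
qed

lemma psdf_decomp:
  assumes "psdf n f"
  shows "\<exists>w. \<forall>i<n. \<forall>j<n. f i j = (\<Sum>p<n. w p i * cnj (w p j))"
  using decomp_aux[of n n f] assms by simp



lemma sum_split: fixes m n :: nat shows "(\<Sum>i<m*n. g i) = (\<Sum>r<m. \<Sum>b<n. g (r*n+b))"
proof -
  have "(\<Sum>i<m*n. g i) = (\<Sum>r<m. sum g {r*n..<r*n+n})" using sum.nat_group[of g n m] by simp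
  also have "\<dots> = (\<Sum>r<m. \<Sum>b<n. g (r*n+b))"
  proof (rule sum.cong[OF refl])
    fix r
    show "sum g {r*n..<r*n+n} = (\<Sum>b<n. g (r*n+b))"
      using sum.shift_bounds_nat_ivl[of g 0 "r*n" n] by (simp add: atLeast0LessThan add.commute)
  qed
  finally show ?thesis .
qed

lemma kron_qf_expand:
  fixes A :: "nat \<Rightarrow> nat \<Rightarrow> complex"
  assumes "\<forall>k<n. \<forall>l<n. B k l = (\<Sum>p<n. w p k * cnj (w p l))"
  shows "(\<Sum>r<m. \<Sum>k<n. \<Sum>s<m. \<Sum>l<n. cnj (v (r*n+k)) * A r s * B k l * v (s*n+l)) =
    (\<Sum>p<n. qf m A (\<lambda>s. \<Sum>l<n. cnj (w p l) * v (s*n+l)))"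
proof -
  let ?T = "\<lambda>p r s k l. cnj (v (r*n+k)) * A r s * (w p k * cnj (w p l)) * v (s*n+l)"
  have L: "(\<Sum>r<m. \<Sum>k<n. \<Sum>s<m. \<Sum>l<n. cnj (v (r*n+k)) * A r s * B k l * v (s*n+l)) =
     (\<Sum>r<m. \<Sum>k<n. \<Sum>s<m. \<Sum>l<n. \<Sum>p<n. ?T p r s k l)"
    using assms by (simp add: sum_distrib_left sum_distrib_right)
  have R: "(\<Sum>p<n. qf m A (\<lambda>s. \<Sum>l<n. cnj (w p l) * v (s*n+l))) =
     (\<Sum>p<n. \<Sum>r<m. \<Sum>s<m. \<Sum>k<n. \<Sum>l<n. ?T p r s k l)"
    unfolding qf_def by (simp add: sum_distrib_left sum_distrib_right mult.commute mult.left_commute)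
  have "(\<Sum>p<n. \<Sum>r<m. \<Sum>s<m. \<Sum>k<n. \<Sum>l<n. ?T p r s k l) =
        (\<Sum>r<m. \<Sum>p<n. \<Sum>s<m. \<Sum>k<n. \<Sum>l<n. ?T p r s k l)" by (rule sum.swap)
  also have "\<dots> = (\<Sum>r<m. \<Sum>s<m. \<Sum>p<n. \<Sum>k<n. \<Sum>l<n. ?T p r s k l)"
    by (intro sum.cong refl sum.swap)
  also have "\<dots> = (\<Sum>r<m. \<Sum>s<m. \<Sum>k<n. \<Sum>p<n. \<Sum>l<n. ?T p r s k l)"
    by (intro sum.cong refl sum.swap)
  also have "\<dots> = (\<Sum>r<m. \<Sum>s<m. \<Sum>k<n. \<Sum>l<n. \<Sum>p<n. ?T p r s k l)"
    by (intro sum.cong refl sum.swap)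
  also have "\<dots> = (\<Sum>r<m. \<Sum>k<n. \<Sum>s<m. \<Sum>l<n. \<Sum>p<n. ?T p r s k l)"
    by (intro sum.cong refl sum.swap)
  finally show ?thesis using L R by simp
qed



lemma nn_sum: "(\<And>p. p \<in> S \<Longrightarrow> nn (g p)) \<Longrightarrow> nn (sum g S)"
  unfolding nn_def by (induction S rule: infinite_finite_induct) auto

lemma idx_lt: "r < m \<Longrightarrow> k < (n::nat) \<Longrightarrow> r*n+k < m*n"
proof -
  assume "r < m" "k < n"
  hence "r*n+k < r*n + n" by simp
  also have "\<dots> = Suc r * n" by simp
  also have "\<dots> \<le> m*n" using \<open>r < m\<close> by (intro mult_right_mono) auto
  finally show ?thesis .
qed

lemma kron_entry:
  assumes "A \<in> carrier_mat m m" "B \<in> carrier_mat n n" "r < m" "k < n" "s < m" "l < n"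
  shows "kron A B $$ (r*n+k, s*n+l) = A $$ (r,s) * B $$ (k,l)"
  using assms idx_lt[OF assms(3,4)] idx_lt[OF assms(5,6)] unfolding kron_def by simp

lemma kron_carrier:
  "A \<in> carrier_mat m m \<Longrightarrow> B \<in> carrier_mat n n \<Longrightarrow> kron A B \<in> carrier_mat (m*n) (m*n)"
  unfolding kron_def by simp

lemma kron_psd:
  assumes A: "psd m A" and B: "psd n B"
  shows "psd (m*n) (kron A B)"
proof -
  have cA: "A \<in> carrier_mat m m" and pA: "psdf m (\<lambda>i j. A $$ (i,j))" using A psd_iff by auto
  have cB: "B \<in> carrier_mat n n" and pB: "psdf n (\<lambda>i j. B $$ (i,j))" using B psd_iff by auto
  obtain w where w: "\<forall>k<n. \<forall>l<n. B $$ (k,l) = (\<Sum>p<n. w p k * cnj (w p l))"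
    using psdf_decomp[OF pB] by auto
  show ?thesis unfolding psd_iff psdf_def
  proof (intro conjI allI kron_carrier cA cB)
    fix v
    have "qf (m*n) (\<lambda>i j. kron A B $$ (i,j)) v =
      (\<Sum>r<m. \<Sum>k<n. \<Sum>s<m. \<Sum>l<n. cnj (v (r*n+k)) * A $$ (r,s) * B $$ (k,l) * v (s*n+l))"
      unfolding qf_def sum_split using kron_entry[OF cA cB]
      by (intro sum.cong refl) (simp add: mult.assoc)
    also have "\<dots> = (\<Sum>p<n. qf m (\<lambda>i j. A $$ (i,j)) (\<lambda>s. \<Sum>l<n. cnj (w p l) * v (s*n+l)))"
      by (rule kron_qf_expand[OF w])
    finally show "nn (qf (m*n) (\<lambda>i j. kron A B $$ (i,j)) v)"
      using pA unfolding psdf_def by (simp add: nn_sum)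
  qed
qed

lemma kron_trace:
  assumes "A \<in> carrier_mat m m" "B \<in> carrier_mat n n"
  shows "mtrace (kron A B) = mtrace A * mtrace B"
proof -
  have "mtrace (kron A B) = (\<Sum>i<m*n. kron A B $$ (i,i))"
    unfolding mtrace_def using kron_carrier[OF assms] by simp
  also have "\<dots> = (\<Sum>r<m. \<Sum>k<n. A $$ (r,r) * B $$ (k,k))"
    unfolding sum_split using kron_entry[OF assms] by (intro sum.cong refl) simp
  also have "\<dots> = mtrace A * mtrace B"
  proof -
    have dA: "dim_row A = m" and dB: "dim_row B = n" using assms by auto
    show ?thesis unfolding mtrace_def dA dB sum_product by (rule refl)
  qed
  finally show ?thesis .
qed

lemma kron_density:
  "density m A \<Longrightarrow> density n B \<Longrightarrow> density (m*n) (kron A B)"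
proof -
  assume a: "density m A" "density n B"
  hence p: "psd m A" "psd n B" and t: "mtrace A = 1" "mtrace B = 1" unfolding density_def by auto
  have c: "A \<in> carrier_mat m m" "B \<in> carrier_mat n n" using p unfolding psd_def by auto
  show ?thesis unfolding density_def using kron_psd[OF p] kron_trace[OF c] t by simp
qed



lemma divmod_idx: "b < (m::nat) \<Longrightarrow> (r*m+b) div m = r" "b < m \<Longrightarrow> (r*m+b) mod m = b"
  by auto

lemma block_carrier: "block n X i j \<in> carrier_mat n n" unfolding block_def by simp

lemma mtrace_block: "mtrace (block n X r r) = (\<Sum>a<n. X $$ (r*n+a, r*n+a))"
  unfolding mtrace_def block_def by (simp add: mult.commute)

lemma channelD:
  assumes "channel n m K"
  shows "0 < n" "0 < m" "X \<in> carrier_mat n n \<Longrightarrow> K X \<in> carrier_mat m m"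
    "X \<in> carrier_mat n n \<Longrightarrow> mtrace (K X) = mtrace X"
    "X \<in> carrier_mat n n \<Longrightarrow> Y \<in> carrier_mat n n \<Longrightarrow> K (a \<cdot>\<^sub>m X + b \<cdot>\<^sub>m Y) = a \<cdot>\<^sub>m K X + b \<cdot>\<^sub>m K Y"
    "0 < dR \<Longrightarrow> psd (dR * n) Z \<Longrightarrow> psd (dR * m) (id_tensor dR n m K Z)"
  using assms unfolding channel_def by auto

lemma id_tensor_trace:
  assumes ch: "channel n m K" and X: "X \<in> carrier_mat (dR*n) (dR*n)"
  shows "mtrace (id_tensor dR n m K X) = mtrace X"
proof -
  have m: "0 < m" using channelD[OF ch] by simp
  have "mtrace (id_tensor dR n m K X) = (\<Sum>i<dR*m. K (block n X (i div m) (i div m)) $$ (i mod m, i mod m))"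
    unfolding mtrace_def id_tensor_def by simp
  also have "\<dots> = (\<Sum>r<dR. \<Sum>b<m. K (block n X r r) $$ (b, b))"
    unfolding sum_split by (intro sum.cong refl) (simp add: divmod_idx)
  also have "\<dots> = (\<Sum>r<dR. mtrace (K (block n X r r)))"
    using channelD(3)[OF ch block_carrier] unfolding mtrace_def by (intro sum.cong refl) (metis carrier_matD(1))
  also have "\<dots> = (\<Sum>r<dR. mtrace (block n X r r))"
    using channelD(4)[OF ch block_carrier] by simp
  also have "\<dots> = (\<Sum>r<dR. \<Sum>a<n. X $$ (r*n+a, r*n+a))" unfolding mtrace_block ..
  also have "\<dots> = mtrace X" unfolding mtrace_def using X sum_split[where m=dR and n=n and g="\<lambda>i. X $$ (i,i)"] by simp
  finally show ?thesis .
qed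

lemma id_tensor_density:
  assumes ch: "channel n m K" and dR: "0 < dR" and d: "density (dR*n) X"
  shows "density (dR*m) (id_tensor dR n m K X)"
proof -
  have p: "psd (dR*n) X" and t: "mtrace X = 1" using d unfolding density_def by auto
  have c: "X \<in> carrier_mat (dR*n) (dR*n)" using p unfolding psd_def by auto
  show ?thesis unfolding density_def using channelD(6)[OF ch dR p] id_tensor_trace[OF ch c] t by simp
qed



lemma id_tensor_compose:
  assumes m: "0 < m" and dR: "0 < dR"
  shows "id_tensor dR' (dR*n) (dR*m) (id_tensor dR n m K) X = id_tensor (dR'*dR) n m K X"
proof (rule eq_matI)
  show "dim_row (id_tensor dR' (dR*n) (dR*m) (id_tensor dR n m K) X) = dim_row (id_tensor (dR'*dR) n m K X)"
    "dim_col (id_tensor dR' (dR*n) (dR*m) (id_tensor dR n m K) X) = dim_col (id_tensor (dR'*dR) n m K X)"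
    unfolding id_tensor_def by (simp_all add: mult.assoc)
  fix r c assume r: "r < dim_row (id_tensor (dR'*dR) n m K X)" and c: "c < dim_col (id_tensor (dR'*dR) n m K X)"
  have r': "r < dR'*(dR*m)" and c': "c < dR'*(dR*m)" using r c unfolding id_tensor_def by (simp_all add: mult.assoc)
  define r1 r2 c1 c2 where "r1 = r div (dR*m)" "r2 = r mod (dR*m)" "c1 = c div (dR*m)" "c2 = c mod (dR*m)"
  have dRm: "0 < dR*m" using m dR by simp
  have r2: "r2 < dR*m" "c2 < dR*m" using dRm r1_r2_c1_c2_def by simp_all
  have rd: "r div m = r1*dR + r2 div m" "c div m = c1*dR + c2 div m"
  proof -
    have "r = (r1*dR)*m + r2" using r1_r2_c1_c2_def by (metis div_mult_mod_eq mult.assoc)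
    hence "r div m = ((r1*dR)*m + r2) div m" by simp
    thus "r div m = r1*dR + r2 div m" using m by simp
    have "c = (c1*dR)*m + c2" using r1_r2_c1_c2_def by (metis div_mult_mod_eq mult.assoc)
    hence "c div m = ((c1*dR)*m + c2) div m" by simp
    thus "c div m = c1*dR + c2 div m" using m by simp
  qed
  have rm: "r mod m = r2 mod m" "c mod m = c2 mod m" unfolding r1_r2_c1_c2_def
    by (simp_all add: mod_mod_cancel)
  have i: "r2 div m < dR" "c2 div m < dR" using r2 by (simp_all add: less_mult_imp_div_less mult.commute)
  have blk: "block n (block (dR*n) X r1 c1) (r2 div m) (c2 div m) = block n X (r div m) (c div m)"
  proof (rule eq_matI)
    fix a b assume a: "a < dim_row (block n X (r div m) (c div m))" and b: "b < dim_col (block n X (r div m) (c div m))"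
    have a': "a < n" "b < n" using a b unfolding block_def by auto
    have lt: "(r2 div m)*n + a < dR*n" "(c2 div m)*n + b < dR*n"
      using idx_lt[OF i(1) a'(1)] idx_lt[OF i(2) a'(2)] by simp_all
    have e1: "r1 * (dR*n) + ((r2 div m)*n + a) = (r div m)*n + a" unfolding rd by (simp add: algebra_simps)
    have e2: "c1 * (dR*n) + ((c2 div m)*n + b) = (c div m)*n + b" unfolding rd by (simp add: algebra_simps)
    show "block n (block (dR*n) X r1 c1) (r2 div m) (c2 div m) $$ (a, b) = block n X (r div m) (c div m) $$ (a, b)"
      using a' lt unfolding block_def by (simp add: e1 e2)
  qed (simp_all add: block_def)
  show "id_tensor dR' (dR*n) (dR*m) (id_tensor dR n m K) X $$ (r, c) = id_tensor (dR'*dR) n m K X $$ (r, c)"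
    using r' c' r2 unfolding id_tensor_def
    by (simp add: r1_r2_c1_c2_def[symmetric] blk rm mult.assoc)
qed



lemma block_lin:
  assumes X: "X \<in> carrier_mat (dR*n) (dR*n)" and Y: "Y \<in> carrier_mat (dR*n) (dR*n)"
    and i: "i < dR" and j: "j < dR"
  shows "block n (a \<cdot>\<^sub>m X + b \<cdot>\<^sub>m Y) i j = a \<cdot>\<^sub>m block n X i j + b \<cdot>\<^sub>m block n Y i j"
proof (rule eq_matI)
  fix x y assume "x < dim_row (a \<cdot>\<^sub>m block n X i j + b \<cdot>\<^sub>m block n Y i j)"
    "y < dim_col (a \<cdot>\<^sub>m block n X i j + b \<cdot>\<^sub>m block n Y i j)"
  hence xy: "x < n" "y < n" unfolding block_def by auto
  have "i*n+x < dR*n" "j*n+y < dR*n" using idx_lt i j xy by auto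
  thus "block n (a \<cdot>\<^sub>m X + b \<cdot>\<^sub>m Y) i j $$ (x, y) = (a \<cdot>\<^sub>m block n X i j + b \<cdot>\<^sub>m block n Y i j) $$ (x, y)"
    using X Y xy unfolding block_def by simp
qed (auto simp: block_def)

lemma id_tensor_channel:
  assumes ch: "channel n m K" and dR: "0 < dR"
  shows "channel (dR*n) (dR*m) (id_tensor dR n m K)"
proof -
  have n: "0 < n" and m: "0 < m" using channelD[OF ch] by auto
  have lin: "id_tensor dR n m K (a \<cdot>\<^sub>m X + b \<cdot>\<^sub>m Y) = a \<cdot>\<^sub>m id_tensor dR n m K X + b \<cdot>\<^sub>m id_tensor dR n m K Y"
    if X: "X \<in> carrier_mat (dR*n) (dR*n)" and Y: "Y \<in> carrier_mat (dR*n) (dR*n)" for a b X Y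
  proof (rule eq_matI)
    fix r c assume "r < dim_row (a \<cdot>\<^sub>m id_tensor dR n m K X + b \<cdot>\<^sub>m id_tensor dR n m K Y)"
      "c < dim_col (a \<cdot>\<^sub>m id_tensor dR n m K X + b \<cdot>\<^sub>m id_tensor dR n m K Y)"
    hence rc: "r < dR*m" "c < dR*m" unfolding id_tensor_def by auto
    have i: "r div m < dR" "c div m < dR" using rc by (simp_all add: less_mult_imp_div_less)
    have mm: "r mod m < m" "c mod m < m" using m by auto
    have cK: "K (block n X (r div m) (c div m)) \<in> carrier_mat m m" "K (block n Y (r div m) (c div m)) \<in> carrier_mat m m"
      using channelD(3)[OF ch block_carrier] by auto
    show "id_tensor dR n m K (a \<cdot>\<^sub>m X + b \<cdot>\<^sub>m Y) $$ (r, c) =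
      (a \<cdot>\<^sub>m id_tensor dR n m K X + b \<cdot>\<^sub>m id_tensor dR n m K Y) $$ (r, c)"
      using rc mm cK unfolding id_tensor_def
      by (simp add: block_lin[OF X Y i] channelD(5)[OF ch block_carrier block_carrier])
  qed (auto simp: id_tensor_def)
  have cp: "psd (dR' * (dR*m)) (id_tensor dR' (dR*n) (dR*m) (id_tensor dR n m K) X)"
    if "0 < dR'" "psd (dR' * (dR*n)) X" for dR' X
  proof -
    have "psd ((dR'*dR) * n) X" using that(2) by (simp add: mult.assoc)
    hence "psd ((dR'*dR) * m) (id_tensor (dR'*dR) n m K X)" using channelD(6)[OF ch] that(1) dR by simp
    thus ?thesis unfolding id_tensor_compose[OF m dR] by (simp add: mult.assoc)
  qed
  show ?thesis unfolding channel_def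
    using n m dR lin cp id_tensor_trace[OF ch] by (auto simp: id_tensor_def)
qed



definition trch :: "complex mat \<Rightarrow> complex mat" where
  "trch X = mat 1 1 (\<lambda>_. mtrace X)"

lemma sum_if_r: fixes n :: nat shows "(\<Sum>l<n. f l * (if l = a then x else 0)) = (if a < n then f a * (x::complex) else 0)"
proof -
  have "(\<Sum>l<n. f l * (if l = a then x else 0)) = (\<Sum>l<n. if l = a then f a * x else 0)"
    by (intro sum.cong refl) auto
  thus ?thesis using sum.delta[of "{..<n}" a "\<lambda>_. f a * x"] by simp
qed

lemma sum_if_l: fixes n :: nat shows "(\<Sum>k<n. (if k = a then x else 0) * f k) = (if a < n then (x::complex) * f a else 0)"
proof -
  have "(\<Sum>k<n. (if k = a then x else 0) * f k) = (\<Sum>k<n. if k = a then x * f a else 0)"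
    by (intro sum.cong refl) auto
  thus ?thesis using sum.delta[of "{..<n}" a "\<lambda>_. x * f a"] by simp
qed

lemma pt_qf:
  assumes a: "a < n"
  shows "qf (dR*n) f (\<lambda>i. if i mod n = a then v (i div n) else 0) =
    (\<Sum>r<dR. \<Sum>s<dR. cnj (v r) * f (r*n+a) (s*n+a) * v s)"
proof -
  have "qf (dR*n) f (\<lambda>i. if i mod n = a then v (i div n) else 0) =
    (\<Sum>r<dR. \<Sum>k<n. \<Sum>s<dR. \<Sum>l<n. (if k = a then cnj (v r) else 0) * (f (r*n+k) (s*n+l) * (if l = a then v s else 0)))"
    unfolding qf_def sum_split by (intro sum.cong refl) (auto simp: divmod_idx)
  also have "\<dots> = (\<Sum>r<dR. \<Sum>k<n. (if k = a then cnj (v r) else 0) * (\<Sum>s<dR. f (r*n+k) (s*n+a) * v s))"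
    using a by (intro sum.cong refl) (simp add: sum_distrib_left[symmetric] sum_if_r)
  also have "\<dots> = (\<Sum>r<dR. cnj (v r) * (\<Sum>s<dR. f (r*n+a) (s*n+a) * v s))"
    using a by (simp only: sum_if_l) simp
  also have "\<dots> = (\<Sum>r<dR. \<Sum>s<dR. cnj (v r) * f (r*n+a) (s*n+a) * v s)"
    by (simp add: sum_distrib_left mult.assoc)
  finally show ?thesis .
qed

lemma trch_channel:
  assumes n: "0 < n"
  shows "channel n 1 trch"
proof -
  have tr_lin: "mtrace (a \<cdot>\<^sub>m X + b \<cdot>\<^sub>m Y) = a * mtrace X + b * mtrace Y"
    if "X \<in> carrier_mat n n" "Y \<in> carrier_mat n n" for a b X Y
    using that unfolding mtrace_def by (simp add: sum.distrib sum_distrib_left)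
  have lin: "trch (a \<cdot>\<^sub>m X + b \<cdot>\<^sub>m Y) = a \<cdot>\<^sub>m trch X + b \<cdot>\<^sub>m trch Y"
    if "X \<in> carrier_mat n n" "Y \<in> carrier_mat n n" for a b X Y
    unfolding trch_def tr_lin[OF that] by (rule eq_matI) auto
  have cp: "psd (dR * 1) (id_tensor dR n 1 trch X)" if "0 < dR" "psd (dR * n) X" for dR X
  proof -
    have pX: "psdf (dR*n) (\<lambda>i j. X $$ (i,j))" using that(2) psd_iff by auto
    have ent: "id_tensor dR n 1 trch X $$ (r,s) = (\<Sum>a<n. X $$ (r*n+a, s*n+a))" if "r < dR" "s < dR" for r s
      using that unfolding id_tensor_def trch_def mtrace_def block_def by (simp add: mult.commute)
    show ?thesis unfolding psd_iff psdf_def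
    proof (intro conjI allI)
      show "id_tensor dR n 1 trch X \<in> carrier_mat (dR * 1) (dR * 1)" unfolding id_tensor_def by simp
      fix v
      have "qf (dR * 1) (\<lambda>i j. id_tensor dR n 1 trch X $$ (i,j)) v =
         (\<Sum>r<dR. \<Sum>s<dR. \<Sum>a<n. cnj (v r) * X $$ (r*n+a, s*n+a) * v s)"
        unfolding qf_def using ent by (simp add: sum_distrib_left sum_distrib_right)
      also have "\<dots> = (\<Sum>r<dR. \<Sum>a<n. \<Sum>s<dR. cnj (v r) * X $$ (r*n+a, s*n+a) * v s)"
        by (intro sum.cong refl sum.swap)
      also have "\<dots> = (\<Sum>a<n. \<Sum>r<dR. \<Sum>s<dR. cnj (v r) * X $$ (r*n+a, s*n+a) * v s)"
        by (rule sum.swap)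
      also have "\<dots> = (\<Sum>a<n. qf (dR*n) (\<lambda>i j. X $$ (i,j)) (\<lambda>i. if i mod n = a then v (i div n) else 0))"
        by (intro sum.cong refl) (simp add: pt_qf)
      finally show "nn (qf (dR * 1) (\<lambda>i j. id_tensor dR n 1 trch X $$ (i,j)) v)"
        using pX unfolding psdf_def by (simp add: nn_sum)
    qed
  qed
  show ?thesis unfolding channel_def using n lin cp by (auto simp: trch_def mtrace_def)
qed



lemma density_pos: "density n A \<Longrightarrow> 0 < n"
  unfolding density_def psd_def mtrace_def by (cases n) auto

lemma density_one: "density 1 (mat 1 1 (\<lambda>_. 1))"
proof -
  have "psdf 1 (\<lambda>i j. mat 1 1 (\<lambda>_. 1) $$ (i,j))" unfolding psdf_def qf_def nn_def
    by (simp add: complex_norm_square[symmetric])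
  thus ?thesis unfolding density_def psd_iff mtrace_def by simp
qed

lemma fisher_nonneg:
  assumes gf: "gen_fisher I" and wf: "weakly_faithful I" and d: "\<forall>t. density n (\<rho> t)"
  shows "0 \<le> I \<theta> \<rho>"
proof -
  have n: "0 < n" using d density_pos by blast
  have "I \<theta> (\<lambda>t. trch (\<rho> t)) \<le> I \<theta> \<rho>"
    using gf trch_channel[OF n] d unfolding gen_fisher_def by blast
  moreover have "(\<lambda>t. trch (\<rho> t)) = (\<lambda>t. mat 1 1 (\<lambda>_. 1))"
    using d unfolding trch_def density_def by simp
  moreover have "I \<theta> (\<lambda>t. mat 1 1 (\<lambda>_. 1)) = 0"
    using wf density_one unfolding weakly_faithful_def by blast
  ultimately show ?thesis by simp
qed

lemma gen_fisherD:
  "gen_fisher I \<Longrightarrow> channel a b K \<Longrightarrow> (\<forall>t. density a (\<rho> t)) \<Longrightarrow> I \<theta> (\<lambda>t. K (\<rho> t)) \<le> I \<theta> \<rho>"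
  unfolding gen_fisher_def by blast

lemma ereal_aux: "x \<le> ereal r + y \<Longrightarrow> x - ereal r \<le> (y::ereal)"
  by (cases x; cases y) auto

theorem mainTheorem19:
  fixes I :: fisher
    and dA dB dE :: nat
    and N :: "real \<Rightarrow> complex mat \<Rightarrow> complex mat"
    and \<rho>E :: "real \<Rightarrow> complex mat"
    and \<theta> :: real
  assumes "gen_fisher I"
    and "weakly_faithful I"
    and "subadditive_product I"
    and "env_seizable dA dB dE N \<rho>E"
  shows "amortized_fisher I dA dB \<theta> N = I \<theta> \<rho>E"
proof -
  note gf = assms(1) and wf = assms(2) and sa = assms(3)
  obtain M where env: "env_parameterized dA dB dE N \<rho>E M" using assms(4) unfolding env_seizable_def by blast
  obtain dR0 \<zeta> D where dR0: "0 < dR0" and z: "density (dR0 * dA) \<zeta>" and chD: "channel (dR0 * dB) dE D"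
    and Dz: "\<forall>t. D (id_tensor dR0 dA dB (N t) \<zeta>) = \<rho>E t"
    using assms(4) unfolding env_seizable_def by blast
  have chM: "channel (dA*dE) dB M" and chN: "\<And>t. channel dA dB (N t)" and dE: "\<forall>t. density dE (\<rho>E t)"
    and eq: "\<And>t dR \<omega>. 0 < dR \<Longrightarrow> density (dR*dA) \<omega> \<Longrightarrow>
        id_tensor dR dA dB (N t) \<omega> = id_tensor dR (dA * dE) dB M (kron \<omega> (\<rho>E t))"
    using env unfolding env_parameterized_def by auto
  define S where "S = {(dR, \<rho>). 0 < dR \<and> (\<forall>t. density (dR * dA) (\<rho> t)) \<and> I \<theta> \<rho> < \<infinity>}"
  define F where "F = (\<lambda>p. I \<theta> (\<lambda>t. id_tensor (fst p) dA dB (N t) (snd p t)) - I \<theta> (snd p))"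
  have A: "amortized_fisher I dA dB \<theta> N = (SUP p \<in> S. F p)"
    unfolding amortized_fisher_def S_def F_def ..
  have up: "F p \<le> I \<theta> \<rho>E" if "p \<in> S" for p
  proof -
    obtain dR \<rho> where p: "p = (dR, \<rho>)" by (cases p)
    have dR: "0 < dR" and d: "\<forall>t. density (dR * dA) (\<rho> t)" and fin: "I \<theta> \<rho> < \<infinity>"
      using that unfolding S_def p by auto
    have nn0: "0 \<le> I \<theta> \<rho>" using fisher_nonneg[OF gf wf d] .
    then obtain r where r: "I \<theta> \<rho> = ereal r" using fin by (cases "I \<theta> \<rho>") auto
    have "I \<theta> (\<lambda>t. id_tensor dR dA dB (N t) (\<rho> t)) = I \<theta> (\<lambda>t. id_tensor dR (dA * dE) dB M (kron (\<rho> t) (\<rho>E t)))"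
      using eq[OF dR] d by simp
    also have "\<dots> \<le> I \<theta> (\<lambda>t. kron (\<rho> t) (\<rho>E t))"
    proof -
      have ch: "channel (dR * (dA*dE)) (dR*dB) (id_tensor dR (dA * dE) dB M)"
        using id_tensor_channel[OF chM dR] .
      have "\<forall>t. density (dR * (dA*dE)) (kron (\<rho> t) (\<rho>E t))"
        using kron_density d dE by (metis mult.assoc)
      thus ?thesis by (rule gen_fisherD[OF gf ch])
    qed
    also have "\<dots> \<le> I \<theta> \<rho> + I \<theta> \<rho>E" using sa d dE unfolding subadditive_product_def by blast
    finally show ?thesis unfolding F_def p using ereal_aux r by simp
  qed
  have p0: "(dR0, \<lambda>t. \<zeta>) \<in> S"
    using dR0 z wf unfolding S_def weakly_faithful_def by auto
  have low: "I \<theta> \<rho>E \<le> F (dR0, \<lambda>t. \<zeta>)"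
  proof -
    have "I \<theta> (\<lambda>t. \<zeta>) = 0" using wf z unfolding weakly_faithful_def by blast
    hence "F (dR0, \<lambda>t. \<zeta>) = I \<theta> (\<lambda>t. id_tensor dR0 dA dB (N t) \<zeta>)" unfolding F_def by simp
    moreover have "I \<theta> (\<lambda>t. D (id_tensor dR0 dA dB (N t) \<zeta>)) \<le> I \<theta> (\<lambda>t. id_tensor dR0 dA dB (N t) \<zeta>)"
      by (rule gen_fisherD[OF gf chD]) (use id_tensor_density[OF chN dR0 z] in blast)
    moreover have "(\<lambda>t. D (id_tensor dR0 dA dB (N t) \<zeta>)) = \<rho>E" using Dz by auto
    ultimately show ?thesis by simp
  qed
  show ?thesis unfolding A
  proof (rule antisym)
    show "(SUP p \<in> S. F p) \<le> I \<theta> \<rho>E" by (rule SUP_least) (rule up)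
    show "I \<theta> \<rho>E \<le> (SUP p \<in> S. F p)" by (rule SUP_upper2[where f=F, OF p0 low])
  qed
qed


end
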